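(* For sequences $(r_n)_{n\in\mathbb Z},(r'_n)_{n\in\mathbb Z}$ with $0<r_n,r'_n<1$ and $(\theta_n)_{n\in\mathbb Z},(\theta'_n)_{n\in\mathbb Z}$ with $\theta_n,\theta'_n\in[0,2\pi)$ and $\theta_0=\theta_1=\theta'_0=\theta'_1=0$, define \[ U_{r,\theta}=\sum_{n\in\mathbb Z}|e_1^{n-1}\rangle\langle r_ne_1^n+e^{i\theta_n}s_ne_2^n|+|e_2^{n+1}\rangle\langle -e^{-i\theta_n}s_ne_1^n+r_ne_2^n|,\quad s_n=\sqrt{1-r_n^2}, \] and $U_{r',\theta'}$ analogously. Then $U_{r,\theta}$ and $U_{r',\theta'}$ are unitary equivalent if and only if $r=r'$ and $\theta=\theta'$.
   Context: Let $\mathcal H_n=\mathbb C^2$ for $n\in\mathbb Z$, $\mathcal H=\bigoplus_{n\in\mathbb Z}\mathcal H_n$, and $\{e_1^n,e_2^n\}$ the standard basis of $\mathcal H_n$. Dirac notation: $|x\rangle\langle y|$ is the operator $z\mapsto\langle y,z\rangle x$ (inner product conjugate-linear in the first argument). Since a unitary $U$ and $e^{i\lambda}U$ are identified, two unitaries $U_1,U_2$ on $\mathcal H$ are called unitary equivalent if there exist $\lambda\in\mathbb R$ and a unitary $W=\bigoplus_{n\in\mathbb Z}W_n$ (each $W_n$ a unitary on $\mathcal H_n$) with $e^{i\lambda}WU_1W^*=U_2$. *)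

theory Defs
  imports "HOL-Analysis.Analysis"
begin

text \<open>The Hilbert space H = direct sum over n in Z of C^2 is modelled by
  vectors x :: int => complex^2 with square-summable norms.  Component 1 of
  x n is the coefficient of e_1^n, component 2 that of e_2^n.\<close>

type_synonym hvec = "int \<Rightarrow> complex ^ 2"

definition l2vec :: "hvec \<Rightarrow> bool" where
  "l2vec x \<longleftrightarrow> (\<lambda>n. (norm (x n))\<^sup>2) summable_on (UNIV :: int set)"

definition cinner2 :: "complex ^ 2 \<Rightarrow> complex ^ 2 \<Rightarrow> complex" where
  "cinner2 y z = cnj (y $ 1) * z $ 1 + cnj (y $ 2) * z $ 2"

definition mk2 :: "complex \<Rightarrow> complex \<Rightarrow> complex ^ 2" where
  "mk2 a b = (\<chi> i. if i = 1 then a else b)"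

definition sfun :: "(int \<Rightarrow> real) \<Rightarrow> int \<Rightarrow> real" where
  "sfun r n = sqrt (1 - (r n)\<^sup>2)"

definition vvec :: "(int \<Rightarrow> real) \<Rightarrow> (int \<Rightarrow> real) \<Rightarrow> int \<Rightarrow> complex ^ 2" where
  "vvec r \<theta> n = mk2 (complex_of_real (r n))
                     (exp (\<i> * complex_of_real (\<theta> n)) * complex_of_real (sfun r n))"

definition wvec :: "(int \<Rightarrow> real) \<Rightarrow> (int \<Rightarrow> real) \<Rightarrow> int \<Rightarrow> complex ^ 2" where
  "wvec r \<theta> n = mk2 (- exp (- \<i> * complex_of_real (\<theta> n)) * complex_of_real (sfun r n))
                     (complex_of_real (r n))"

text \<open>U_{r,theta} = sum_n |e_1^{n-1}><v_n| + |e_2^{n+1}><w_n|, i.e.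
  (U x)_m has e_1-coefficient <v_{m+1}, x_{m+1}> and e_2-coefficient <w_{m-1}, x_{m-1}>.\<close>
definition Uop :: "(int \<Rightarrow> real) \<Rightarrow> (int \<Rightarrow> real) \<Rightarrow> hvec \<Rightarrow> hvec" where
  "Uop r \<theta> x = (\<lambda>m. mk2 (cinner2 (vvec r \<theta> (m + 1)) (x (m + 1)))
                          (cinner2 (wvec r \<theta> (m - 1)) (x (m - 1))))"

definition cadj2 :: "complex ^ 2 ^ 2 \<Rightarrow> complex ^ 2 ^ 2" where
  "cadj2 M = (\<chi> i j. cnj (M $ j $ i))"

definition unitary2 :: "complex ^ 2 ^ 2 \<Rightarrow> bool" where
  "unitary2 M \<longleftrightarrow> M ** cadj2 M = mat 1 \<and> cadj2 M ** M = mat 1"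

definition blockop :: "(int \<Rightarrow> complex ^ 2 ^ 2) \<Rightarrow> hvec \<Rightarrow> hvec" where
  "blockop W x = (\<lambda>n. W n *v x n)"

definition unitary_equiv :: "(hvec \<Rightarrow> hvec) \<Rightarrow> (hvec \<Rightarrow> hvec) \<Rightarrow> bool" where
  "unitary_equiv U1 U2 \<longleftrightarrow>
     (\<exists>lam::real. \<exists>W. (\<forall>n. unitary2 (W n)) \<and>
        (\<forall>x. l2vec x \<longrightarrow>
           (\<lambda>n. exp (\<i> * complex_of_real lam) *s
                  blockop W (U1 (blockop (\<lambda>k. cadj2 (W k)) x)) n) = U2 x))"

end

theory Submission
  imports Defs
begin

lemma mk2_nth[simp]: "mk2 a b $ 1 = a" "mk2 a b $ 2 = b"
  by (simp_all add: mk2_def)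

lemma mv2[simp]: "((M::complex^2^2) *v v) $ i = M$i$1 * v$1 + M$i$2 * v$2"
  by (simp add: matrix_vector_mult_def sum_2)

lemma mm2: "((M::complex^2^2) ** N) $ i $ j = M$i$1 * N$1$j + M$i$2 * N$2$j"
  by (simp add: matrix_matrix_mult_def sum_2)

lemma cadj2_nth[simp]: "cadj2 M $ i $ j = cnj (M $ j $ i)"
  by (simp add: cadj2_def)

lemma cinner2_0[simp]: "cinner2 y 0 = 0"
  by (simp add: cinner2_def)

lemma delta_l2: "l2vec (\<lambda>k. if k = n then z else 0)"
proof -
  have "(\<lambda>k. (norm (if k = n then z else 0))\<^sup>2) summable_on {n}" by simp
  then show ?thesis unfolding l2vec_def
    using summable_on_cong_neutral[where S=UNIV and T="{n}" and f="\<lambda>k. (norm (if k = n then z else 0))\<^sup>2" and g="\<lambda>k. (norm (if k = n then z else 0))\<^sup>2"] by auto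
qed

lemma blockop_app: "blockop W x n = W n *v x n"
  by (simp add: blockop_def)

lemma key:
  fixes c :: complex
  assumes eq: "(\<lambda>m. c *s blockop W (Uop r \<theta> (blockop (\<lambda>k. cadj2 (W k)) x)) m) = Uop r' \<theta>' x"
    and xd: "x = (\<lambda>k. if k = n then z else 0)"
  shows "c * W (n-1) $1$1 * cinner2 (vvec r \<theta> n) (cadj2 (W n) *v z) = cinner2 (vvec r' \<theta>' n) z"
    and "c * W (n-1) $2$1 * cinner2 (vvec r \<theta> n) (cadj2 (W n) *v z) = 0"
    and "c * W (n+1) $1$2 * cinner2 (wvec r \<theta> n) (cadj2 (W n) *v z) = 0"
    and "c * W (n+1) $2$2 * cinner2 (wvec r \<theta> n) (cadj2 (W n) *v z) = cinner2 (wvec r' \<theta>' n) z"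
proof -
  have y: "blockop (\<lambda>k. cadj2 (W k)) x = (\<lambda>k. if k = n then cadj2 (W n) *v z else 0)"
    unfolding blockop_def xd by auto
  have e1: "c *s blockop W (Uop r \<theta> (blockop (\<lambda>k. cadj2 (W k)) x)) (n-1) = Uop r' \<theta>' x (n-1)"
    using fun_cong[OF eq, of "n-1"] by simp
  have e2: "c *s blockop W (Uop r \<theta> (blockop (\<lambda>k. cadj2 (W k)) x)) (n+1) = Uop r' \<theta>' x (n+1)"
    using fun_cong[OF eq, of "n+1"] by simp
  have u1: "Uop r \<theta> (blockop (\<lambda>k. cadj2 (W k)) x) (n-1) = mk2 (cinner2 (vvec r \<theta> n) (cadj2 (W n) *v z)) 0"
    unfolding y Uop_def by simp
  have u2: "Uop r \<theta> (blockop (\<lambda>k. cadj2 (W k)) x) (n+1) = mk2 0 (cinner2 (wvec r \<theta> n) (cadj2 (W n) *v z))"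
    unfolding y Uop_def by simp
  have r1: "Uop r' \<theta>' x (n-1) = mk2 (cinner2 (vvec r' \<theta>' n) z) 0"
    unfolding xd Uop_def by simp
  have r2: "Uop r' \<theta>' x (n+1) = mk2 0 (cinner2 (wvec r' \<theta>' n) z)"
    unfolding xd Uop_def by simp
  from e1 have "\<forall>i. (c *s blockop W (Uop r \<theta> (blockop (\<lambda>k. cadj2 (W k)) x)) (n-1)) $ i = Uop r' \<theta>' x (n-1) $ i"
    by simp
  then have A: "\<forall>i. c * ((W (n-1) *v mk2 (cinner2 (vvec r \<theta> n) (cadj2 (W n) *v z)) 0) $ i) = mk2 (cinner2 (vvec r' \<theta>' n) z) 0 $ i"
    unfolding r1 blockop_app[of W] u1 by simp
  from e2 have "\<forall>i. (c *s blockop W (Uop r \<theta> (blockop (\<lambda>k. cadj2 (W k)) x)) (n+1)) $ i = Uop r' \<theta>' x (n+1) $ i"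
    by simp
  then have B: "\<forall>i. c * ((W (n+1) *v mk2 0 (cinner2 (wvec r \<theta> n) (cadj2 (W n) *v z))) $ i) = mk2 0 (cinner2 (wvec r' \<theta>' n) z) $ i"
    unfolding r2 blockop_app[of W] u2 by simp
  show "c * W (n-1) $1$1 * cinner2 (vvec r \<theta> n) (cadj2 (W n) *v z) = cinner2 (vvec r' \<theta>' n) z"
    using A[rule_format, of 1] by (simp add: mult.assoc)
  show "c * W (n-1) $2$1 * cinner2 (vvec r \<theta> n) (cadj2 (W n) *v z) = 0"
    using A[rule_format, of 2] by (simp add: mult.assoc)
  show "c * W (n+1) $1$2 * cinner2 (wvec r \<theta> n) (cadj2 (W n) *v z) = 0"
    using B[rule_format, of 1] by (simp add: mult.assoc)
  show "c * W (n+1) $2$2 * cinner2 (wvec r \<theta> n) (cadj2 (W n) *v z) = cinner2 (wvec r' \<theta>' n) z"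
    using B[rule_format, of 2] by (simp add: mult.assoc)
qed


lemma cadj2_one: "cadj2 (mat 1) = (mat 1 :: complex^2^2)"
  by (auto simp add: vec_eq_iff mat_def cadj2_def)

lemma converse_dir: "unitary_equiv (Uop r \<theta>) (Uop r \<theta>)"
proof -
  have "unitary2 (mat 1)" unfolding unitary2_def cadj2_one by simp
  moreover have "\<And>x. (\<lambda>n. exp (\<i> * complex_of_real 0) *s
                  blockop (\<lambda>n. mat 1) (Uop r \<theta> (blockop (\<lambda>k. cadj2 (mat 1)) x)) n) = Uop r \<theta> x"
    unfolding cadj2_one blockop_def by (simp add: vec_eq_iff)
  ultimately show ?thesis unfolding unitary_equiv_def
    by (intro exI[of _ 0] exI[of _ "\<lambda>n. mat 1"]) simp
qed

theorem theorem2p5: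
  fixes r r' \<theta> \<theta>' :: "int \<Rightarrow> real"
  assumes "\<forall>n. 0 < r n \<and> r n < 1"
    and "\<forall>n. 0 < r' n \<and> r' n < 1"
    and "\<forall>n. 0 \<le> \<theta> n \<and> \<theta> n < 2 * pi"
    and "\<forall>n. 0 \<le> \<theta>' n \<and> \<theta>' n < 2 * pi"
    and "\<theta> 0 = 0" and "\<theta> 1 = 0" and "\<theta>' 0 = 0" and "\<theta>' 1 = 0"
  shows "unitary_equiv (Uop r \<theta>) (Uop r' \<theta>') \<longleftrightarrow> r = r' \<and> \<theta> = \<theta>'"
proof
  assume "r = r' \<and> \<theta> = \<theta>'"
  then show "unitary_equiv (Uop r \<theta>) (Uop r' \<theta>')" using converse_dir by simp
next
  assume "unitary_equiv (Uop r \<theta>) (Uop r' \<theta>')"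
  then obtain lam W where Wu: "\<forall>n. unitary2 (W n)" and
    feq: "\<forall>x. l2vec x \<longrightarrow> (\<lambda>n. exp (\<i> * complex_of_real lam) *s
                  blockop W (Uop r \<theta> (blockop (\<lambda>k. cadj2 (W k)) x)) n) = Uop r' \<theta>' x"
    unfolding unitary_equiv_def by blast
  define c where "c = exp (\<i> * complex_of_real lam)"
  have nc: "norm c = 1" unfolding c_def by (rule norm_exp_i_times)
  have cn: "c * cnj c = 1" using complex_norm_square[of c] nc by simp
  have c0: "c \<noteq> 0" unfolding c_def by simp
  note H = key[OF feq[rule_format, OF delta_l2], OF refl, folded c_def]
  define e1 :: "complex^2" where "e1 = mk2 1 0"
  define e2 :: "complex^2" where "e2 = mk2 0 1"
  have W21: "W m $2$1 = 0" for m
  proof -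
    have h1: "c * W m $1$1 * cinner2 (vvec r \<theta> (m+1)) (cadj2 (W (m+1)) *v e1) = complex_of_real (r' (m+1))"
      using H(1)[of "m+1" e1] by (simp add: e1_def cinner2_def vvec_def)
    have h2: "c * W m $2$1 * cinner2 (vvec r \<theta> (m+1)) (cadj2 (W (m+1)) *v e1) = 0"
      using H(2)[of "m+1" e1] by simp
    have "r' (m+1) \<noteq> 0" using assms(2) by (metis less_irrefl)
    then have "cinner2 (vvec r \<theta> (m+1)) (cadj2 (W (m+1)) *v e1) \<noteq> 0" using h1 by auto
    then show ?thesis using h2 c0 by simp
  qed
  have W12: "W m $1$2 = 0" for m
  proof -
    have h1: "c * W m $2$2 * cinner2 (wvec r \<theta> (m-1)) (cadj2 (W (m-1)) *v e2) = complex_of_real (r' (m-1))"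
      using H(4)[of "m-1" e2] by (simp add: e2_def cinner2_def wvec_def)
    have h2: "c * W m $1$2 * cinner2 (wvec r \<theta> (m-1)) (cadj2 (W (m-1)) *v e2) = 0"
      using H(3)[of "m-1" e2] by simp
    have "r' (m-1) \<noteq> 0" using assms(2) by (metis less_irrefl)
    then have "cinner2 (wvec r \<theta> (m-1)) (cadj2 (W (m-1)) *v e2) \<noteq> 0" using h1 by auto
    then show ?thesis using h2 c0 by simp
  qed
  define a where "a m = W m $1$1" for m
  define b where "b m = W m $2$2" for m
  have an: "cnj (a m) * a m = 1" for m
  proof -
    have "(cadj2 (W m) ** W m) $1$1 = 1" using Wu unfolding unitary2_def by (simp add: mat_def)
    then show ?thesis unfolding a_def mm2 using W21 by simp
  qed
  have bn: "cnj (b m) * b m = 1" for m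
  proof -
    have "(cadj2 (W m) ** W m) $2$2 = 1" using Wu unfolding unitary2_def by (simp add: mat_def)
    then show ?thesis unfolding b_def mm2 using W12 by simp
  qed
  have E1: "c * a (n-1) * (complex_of_real (r n) * cnj (a n)) = complex_of_real (r' n)" for n
    using H(1)[of n e1] W12 W21 by (simp add: a_def e1_def cinner2_def vvec_def)
  have E2: "c * a (n-1) * (cnj (exp (\<i> * complex_of_real (\<theta> n)) * complex_of_real (sfun r n)) * cnj (b n))
     = cnj (exp (\<i> * complex_of_real (\<theta>' n)) * complex_of_real (sfun r' n))" for n
    using H(1)[of n e2] W12 W21 by (simp add: a_def b_def e2_def cinner2_def vvec_def)
  have E3: "c * b (n+1) * (complex_of_real (r n) * cnj (b n)) = complex_of_real (r' n)" for n
    using H(4)[of n e2] W12 W21 by (simp add: b_def e2_def cinner2_def wvec_def)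
  have na: "norm (a m) = 1" for m
  proof -
    have "complex_of_real ((norm (a m))\<^sup>2) = 1" using an[of m] complex_norm_square[of "a m"]
      by (simp only: mult.commute)
    then have "(norm (a m))\<^sup>2 = 1" using of_real_eq_1_iff by blast
    then show ?thesis by (smt (verit) norm_ge_zero power2_eq_1_iff)
  qed
  have rr: "r n = r' n" for n
  proof -
    have "norm (c * a (n-1) * (complex_of_real (r n) * cnj (a n))) = norm (complex_of_real (r' n))"
      using E1[of n] by simp
    then have "\<bar>r n\<bar> = \<bar>r' n\<bar>" by (simp add: norm_mult nc na)
    then show ?thesis using assms(1,2) by (metis abs_of_pos)
  qed
  then have rr': "r = r'" by auto
  have F1: "c * a (n-1) * cnj (a n) = 1" for n
  proof -
    have "r n \<noteq> 0" using assms(1) by (metis less_irrefl)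
    then show ?thesis using E1[of n] rr[of n] by (simp add: field_simps)
  qed
  have F3: "c * b (n+1) * cnj (b n) = 1" for n
  proof -
    have "r n \<noteq> 0" using assms(1) by (metis less_irrefl)
    then show ?thesis using E3[of n] rr[of n] by (simp add: field_simps)
  qed
  define eth where "eth n = exp (\<i> * complex_of_real (\<theta> n))" for n
  define eth' where "eth' n = exp (\<i> * complex_of_real (\<theta>' n))" for n
  have ethn: "eth n * cnj (eth n) = 1" for n
    using complex_norm_square[of "eth n"] norm_exp_i_times[of "\<theta> n"] unfolding eth_def by simp
  define g where "g n = c * a (n-1) * cnj (b n)" for n
  have G: "g n = eth n * cnj (eth' n)" for n
  proof -
    have sp: "sfun r n \<noteq> 0" using assms(1) unfolding sfun_def
      by (metis abs_square_less_1 less_irrefl abs_of_pos eq_iff_diff_eq_0 real_sqrt_eq_zero_cancel_iff)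
    have "g n * cnj (eth n) = cnj (eth' n)"
      using E2[of n] sp unfolding g_def eth_def eth'_def rr'[symmetric] by (simp add: field_simps)
    then have "g n * (eth n * cnj (eth n)) = eth n * cnj (eth' n)" by (metis mult.assoc mult.commute)
    then show ?thesis using ethn by simp
  qed
  have rec: "g (n+1) = c * c * g n" for n
  proof -
    have A: "a n = c * a (n-1)" using F1[of n] an[of n] by (metis mult.assoc mult.commute mult_1_right)
    have "cnj (c * b (n+1) * cnj (b n)) = 1" using F3[of n] by simp
    then have "cnj c * cnj (b (n+1)) * b n = 1" by simp
    then have X: "(c * cnj c) * cnj (b (n+1)) * (b n * cnj (b n)) = c * cnj (b n)"
      by (metis mult.assoc mult.commute mult_1_right)
    have "cnj (b (n+1)) = (c * cnj c) * cnj (b (n+1)) * (b n * cnj (b n))" using cn bn[of n] by (simp only: mult.commute[of "b n"] mult_1_left mult_1_right)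
    also have "\<dots> = c * cnj (b n)" by (rule X)
    finally have B: "cnj (b (n+1)) = c * cnj (b n)" .
    have "g (n+1) = c * a n * cnj (b (n+1))" unfolding g_def by simp
    also have "\<dots> = c * c * g n" unfolding g_def A B by (simp add: algebra_simps)
    finally show ?thesis .
  qed
  have g0: "g 0 = 1" using G[of 0] assms(5,7) unfolding eth_def eth'_def by simp
  have g1: "g 1 = 1" using G[of 1] assms(6,8) unfolding eth_def eth'_def by simp
  have cc: "c * c = 1" using rec[of 0] g0 g1 by simp
  have gs: "g (n+1) = g n" for n using rec[of n] cc by simp
  have gall: "g n = 1" for n
  proof (induct n rule: int_induct[where k=0])
    case base then show ?case by (rule g0)
  next
    case (step1 i) then show ?case using gs[of i] by simp
  next
    case (step2 i) then show ?case using gs[of "i-1"] by simp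
  qed
  have tt: "\<theta> n = \<theta>' n" for n
  proof -
    have cj: "cnj (exp (\<i> * complex_of_real t)) = exp (- \<i> * complex_of_real t)" for t
      by (subst exp_cnj) simp
    have "exp (\<i> * complex_of_real (\<theta> n - \<theta>' n)) = exp (\<i> * complex_of_real (\<theta> n)) * exp (- \<i> * complex_of_real (\<theta>' n))"
      by (simp add: exp_add[symmetric] algebra_simps)
    also have "\<dots> = 1" using gall[of n] G[of n] cj unfolding eth_def eth'_def by simp
    finally have "exp (\<i> * complex_of_real (\<theta> n - \<theta>' n)) = 1" .
    then obtain k :: int where k: "\<theta> n - \<theta>' n = of_int (2 * k) * pi"
      unfolding exp_eq_1 by auto
    have lt: "\<bar>\<theta> n - \<theta>' n\<bar> < 2 * pi" using assms(3,4) by (smt (verit))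
    have "\<bar>of_int k\<bar> < (1::real)"
    proof -
      have "\<bar>of_int k\<bar> * (2 * pi) < 1 * (2 * pi)" using lt k by (simp add: abs_mult mult.commute)
      then show ?thesis using pi_gt_zero by (meson mult_less_cancel_right_pos zero_less_mult_iff zero_less_numeral)
    qed
    then have "k = 0" by linarith
    then show ?thesis using k by simp
  qed
  show "r = r' \<and> \<theta> = \<theta>'" using rr' tt by auto
qed

end
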